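(* There exists a bounded Jordan domain $D\subsetneq\mathbb{R}^2$ which is $\varphi$-uniform for some $\varphi$, such that $\mathbb{R}^2\setminus\overline{D}$ is not $\psi$-uniform for any $\psi$.
   Context: For a domain $G\subsetneq\mathbb{R}^n$ and $x\in G$, $\delta(x)$ denotes the Euclidean distance from $x$ to $\partial G$. The quasihyperbolic metric is $k_G(x,y)=\inf_\gamma\int_\gamma\frac{|dz|}{\delta(z)}$, the infimum over rectifiable paths joining $x,y$ in $G$. Given a strictly increasing homeomorphism $\varphi:[0,\infty)\to[0,\infty)$ with $\varphi(0)=0$, $G$ is $\varphi$-uniform if $k_G(x,y)\le\varphi\big(\frac{|x-y|}{\min\{\delta(x),\delta(y)\}}\big)$ for all $x,y\in G$; "not $\psi$-uniform for any $\psi$" means this fails for every such homeomorphism $\psi$. *)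

theory Defs
  imports "HOL-Analysis.Analysis"
begin

text \<open>The plane R^2 is modelled by the type complex (a 2-dimensional Euclidean space).\<close>

definition is_domain :: "complex set \<Rightarrow> bool" where
  "is_domain G \<longleftrightarrow> open G \<and> connected G \<and> G \<noteq> {}"

definition bdist :: "complex set \<Rightarrow> complex \<Rightarrow> real" where
  "bdist G x = infdist x (frontier G)"

definition jordan_curve :: "(real \<Rightarrow> complex) \<Rightarrow> bool" where
  "jordan_curve c \<longleftrightarrow> simple_path c \<and> pathfinish c = pathstart c"

definition jordan_domain :: "complex set \<Rightarrow> bool" where
  "jordan_domain D \<longleftrightarrow> is_domain D \<and> (\<exists>c. jordan_curve c \<and> frontier D = path_image c)"

definition qh_length :: "complex set \<Rightarrow> (real \<Rightarrow> complex) \<Rightarrow> real" where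
  "qh_length G g = integral {0..1} (\<lambda>t. norm (vector_derivative g (at t)) / bdist G (g t))"

definition qh_dist :: "complex set \<Rightarrow> complex \<Rightarrow> complex \<Rightarrow> real" where
  "qh_dist G x y = Inf {qh_length G g | g. valid_path g \<and> path_image g \<subseteq> G \<and>
      pathstart g = x \<and> pathfinish g = y \<and>
      (\<lambda>t. norm (vector_derivative g (at t)) / bdist G (g t)) integrable_on {0..1}}"

definition control_fun :: "(real \<Rightarrow> real) \<Rightarrow> bool" where
  "control_fun \<phi> \<longleftrightarrow> strict_mono_on {0..} \<phi> \<and> \<phi> 0 = 0 \<and>
      (\<exists>\<psi>. homeomorphism {0..} {0..} \<phi> \<psi>)"

definition phi_uniform :: "(real \<Rightarrow> real) \<Rightarrow> complex set \<Rightarrow> bool" where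
  "phi_uniform \<phi> G \<longleftrightarrow> (\<forall>x\<in>G. \<forall>y\<in>G.
      qh_dist G x y \<le> \<phi> (norm (x - y) / min (bdist G x) (bdist G y)))"

end

theory Submission
  imports Defs
begin

definition ww :: "real \<Rightarrow> real" where "ww a = (a*(1-a))^2"
definition DD :: "complex set" where "DD = {z. 0 < Re z \<and> Re z < 1 \<and> \<bar>Im z\<bar> < ww (Re z)}"
definition CC :: "complex set" where "CC = {z. 0 \<le> Re z \<and> Re z \<le> 1 \<and> \<bar>Im z\<bar> \<le> ww (Re z)}"

lemma ww_nonneg: "0 \<le> ww a" by (simp add: ww_def)

lemma ww_pos: "0 < a \<Longrightarrow> a < 1 \<Longrightarrow> 0 < ww a"
  by (simp add: ww_def)

lemma ww_le_sq: "0 \<le> a \<Longrightarrow> a \<le> 1 \<Longrightarrow> ww a \<le> a^2"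
proof -
  assume "0 \<le> a" "a \<le> 1"
  have "a * a \<le> a * 1" using \<open>a\<le>1\<close> \<open>0\<le>a\<close> by (intro mult_left_mono) auto
  then have "0 \<le> a*(1-a)" "a*(1-a) \<le> a" using \<open>0 \<le> a\<close> \<open>a \<le> 1\<close> by (auto simp: algebra_simps)
  then show ?thesis unfolding ww_def by (simp add: power_mono)
qed

lemma u_le: "a*(1-a) \<le> (1/4::real)"
proof -
  have "0 \<le> (a - 1/2)^2" by simp
  then show ?thesis by (simp add: power2_eq_square algebra_simps)
qed

lemma ww_le_small: "0 \<le> a \<Longrightarrow> a \<le> 1 \<Longrightarrow> ww a \<le> a*(1-a)/4"
proof -
  assume "0 \<le> a" "a \<le> 1"
  then have "0 \<le> a*(1-a)" by simp
  then have "(a*(1-a))*(a*(1-a)) \<le> (a*(1-a))*(1/4)" using u_le[of a] by (rule mult_left_mono[rotated])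
  then show ?thesis unfolding ww_def by (simp add: power2_eq_square)
qed

lemma ww_lip: "0 \<le> a \<Longrightarrow> a \<le> 1 \<Longrightarrow> 0 \<le> c \<Longrightarrow> c \<le> 1 \<Longrightarrow> \<bar>ww a - ww c\<bar> \<le> \<bar>a - c\<bar> / 2"
proof -
  assume h: "0 \<le> a" "a \<le> 1" "0 \<le> c" "c \<le> 1"
  have e: "ww a - ww c = (a*(1-a) - c*(1-c)) * (a*(1-a) + c*(1-c))"
    by (simp add: ww_def power2_eq_square algebra_simps)
  have e2: "a*(1-a) - c*(1-c) = (a - c)*(1 - a - c)" by (simp add: algebra_simps)
  have b1: "\<bar>1 - a - c\<bar> \<le> 1" using h by auto
  have b2: "0 \<le> a*(1-a) + c*(1-c)" "a*(1-a) + c*(1-c) \<le> 1/2" using h u_le[of a] u_le[of c] by auto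
  have "\<bar>ww a - ww c\<bar> = \<bar>a - c\<bar> * \<bar>1 - a - c\<bar> * (a*(1-a) + c*(1-c))"
    unfolding e e2 using b2 by (simp add: abs_mult)
  also have "\<dots> \<le> \<bar>a - c\<bar> * 1 * (1/2)"
    by (intro mult_mono b1 b2) auto
  finally show ?thesis by simp
qed

definition wd :: "real \<Rightarrow> real" where "wd a = 2*(a*(1-a))*(1-2*a)"

lemma ww_deriv: "(ww has_real_derivative wd a) (at a)"
  unfolding ww_def wd_def
  by (auto intro!: derivative_eq_intros simp: algebra_simps power2_eq_square)

lemma wd_bound: "0 \<le> a \<Longrightarrow> a \<le> 1 \<Longrightarrow> \<bar>wd a\<bar> \<le> 1/2"
proof -
  assume h: "0 \<le> a" "a \<le> 1"
  have "\<bar>wd a\<bar> = 2 * (a*(1-a)) * \<bar>1-2*a\<bar>" using h by (simp add: wd_def abs_mult)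
  also have "\<dots> \<le> 2 * (1/4) * 1" using h u_le[of a] by (intro mult_mono) auto
  finally show ?thesis by simp
qed

lemma hvd_complex:
  assumes "(A has_real_derivative A') (at t)" "(B has_real_derivative B') (at t)"
  shows "((\<lambda>\<tau>. Complex (A \<tau>) (B \<tau>)) has_vector_derivative Complex A' B') (at t)"
proof -
  have e: "\<And>a b. Complex a b = of_real a + \<i> * of_real b" by (simp add: complex_eq_iff)
  show ?thesis unfolding e
    by (intro derivative_intros has_vector_derivative_of_real assms)
qed

lemma open_DD: "open DD"
proof -
  have eq: "DD = {z. 0 < Re z} \<inter> {z. Re z < 1} \<inter> {z. \<bar>Im z\<bar> < ww (Re z)}"
    unfolding DD_def by auto
  have o3: "open {z. \<bar>Im z\<bar> < ww (Re z)}"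
    unfolding ww_def by (intro open_Collect_less continuous_intros)
  have o1: "open {z::complex. 0 < Re z}" by (intro open_Collect_less continuous_intros)
  have o2: "open {z::complex. Re z < 1}" by (intro open_Collect_less continuous_intros)
  have "open ({z. 0 < Re z} \<inter> {z. Re z < 1} \<inter> {z. \<bar>Im z\<bar> < ww (Re z)})"
    by (intro open_Int o1 o2 o3)
  then show ?thesis using eq by simp
qed

lemma closed_CC: "closed CC"
proof -
  have eq: "CC = {z. 0 \<le> Re z} \<inter> {z. Re z \<le> 1} \<inter> {z. \<bar>Im z\<bar> \<le> ww (Re z)}"
    unfolding CC_def by auto
  have o3: "closed {z. \<bar>Im z\<bar> \<le> ww (Re z)}"
    unfolding ww_def by (intro closed_Collect_le continuous_intros)
  have o1: "closed {z::complex. 0 \<le> Re z}" by (intro closed_Collect_le continuous_intros)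
  have o2: "closed {z::complex. Re z \<le> 1}" by (intro closed_Collect_le continuous_intros)
  have "closed ({z. 0 \<le> Re z} \<inter> {z. Re z \<le> 1} \<inter> {z. \<bar>Im z\<bar> \<le> ww (Re z)})"
    by (intro closed_Int o1 o2 o3)
  then show ?thesis using eq by simp
qed

lemma DD_sub_CC: "DD \<subseteq> CC" unfolding DD_def CC_def by auto

lemma closure_DD: "closure DD = CC"
proof
  show "closure DD \<subseteq> CC" using closure_minimal[OF DD_sub_CC closed_CC] .
  show "CC \<subseteq> closure DD"
  proof
    fix p assume p: "p \<in> CC"
    show "p \<in> closure DD"
      unfolding closure_approachable
    proof (intro allI impI)
      fix e :: real assume e: "0 < e"
      show "\<exists>y\<in>DD. dist y p < e"
      proof (cases "0 < Re p \<and> Re p < 1")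
        case True
        define l where "l = min (1/2) (e / (\<bar>Im p\<bar> + 1))"
        have l0: "0 < l" "l \<le> 1/2" "l \<le> e / (\<bar>Im p\<bar> + 1)" using e
          by (auto simp: l_def min_def)
        then have l: "0 < l" "l \<le> 1/2" "l * (\<bar>Im p\<bar> + 1) \<le> e"
          by (auto simp: pos_le_divide_eq add_pos_nonneg)
        have wp: "0 < ww (Re p)" using True ww_pos by auto
        have "\<bar>(1-l) * Im p\<bar> < ww (Re p)"
        proof (cases "Im p = 0")
          case True then show ?thesis using wp by simp
        next
          case False
          have "\<bar>(1-l) * Im p\<bar> = (1-l) * \<bar>Im p\<bar>" using l by (simp add: abs_mult)
          also have "\<dots> < \<bar>Im p\<bar>" using l False by (simp add: mult_less_cancel_right)
          finally show ?thesis using p unfolding CC_def by auto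
        qed
        then have "Complex (Re p) ((1-l) * Im p) \<in> DD" using True unfolding DD_def by auto
        moreover have "dist (Complex (Re p) ((1-l) * Im p)) p < e"
        proof -
          have "Complex (Re p) ((1-l) * Im p) - p = Complex 0 (- (l * Im p))"
            by (simp add: complex_eq_iff algebra_simps)
          then have "dist (Complex (Re p) ((1-l) * Im p)) p = \<bar>l * Im p\<bar>"
            by (simp add: dist_norm cmod_def)
          also have "\<dots> = l * \<bar>Im p\<bar>" using l by (simp add: abs_mult)
          finally have "dist (Complex (Re p) ((1-l) * Im p)) p = l * \<bar>Im p\<bar>" .
          also have "\<dots> < l * (\<bar>Im p\<bar> + 1)" using l by simp
          finally show ?thesis using l by simp
        qed
        ultimately show ?thesis by blast
      next
        case False
        then have im0: "Im p = 0" and rp: "Re p = 0 \<or> Re p = 1"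
          using p unfolding CC_def ww_def by auto
        define l where "l = min (1/2) (e/2)"
        have l: "0 < l" "l \<le> 1/2" "l < e" using e by (auto simp: l_def min_def)
        show ?thesis
        proof (cases "Re p = 0")
          case True
          have "Complex l 0 \<in> DD" using l ww_pos[of l] unfolding DD_def by auto
          moreover have "dist (Complex l 0) p < e" using l True im0
            by (simp add: dist_norm cmod_def)
          ultimately show ?thesis by blast
        next
          case False
          then have r1: "Re p = 1" using rp by auto
          have "Complex (1-l) 0 \<in> DD" using l ww_pos[of "1-l"] unfolding DD_def by auto
          moreover have "dist (Complex (1-l) 0) p < e" using l r1 im0
            by (simp add: dist_norm cmod_def)
          ultimately show ?thesis by blast
        qed
      qed
    qed
  qed
qed

lemma frontier_DD: "frontier DD = {z. 0 \<le> Re z \<and> Re z \<le> 1 \<and> \<bar>Im z\<bar> = ww (Re z)}"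
proof -
  have "frontier DD = CC - DD"
    using closure_DD open_DD by (simp add: frontier_def interior_open)
  also have "\<dots> = {z. 0 \<le> Re z \<and> Re z \<le> 1 \<and> \<bar>Im z\<bar> = ww (Re z)}"
    unfolding CC_def DD_def ww_def by (auto simp: less_le)
  finally show ?thesis .
qed

lemma infdist_ge: "A \<noteq> {} \<Longrightarrow> (\<And>a. a \<in> A \<Longrightarrow> d \<le> dist x a) \<Longrightarrow> d \<le> infdist x A"
  by (simp add: infdist_notempty cINF_greatest)

lemma zero_frontier_DD: "0 \<in> frontier DD"
  unfolding frontier_DD by (simp add: ww_def)

lemma frontier_DD_ne: "frontier DD \<noteq> {}" using zero_frontier_DD by auto

lemma abs_Re_diff: "\<bar>Re p - Re z\<bar> \<le> dist p z"
  by (metis abs_Re_le_cmod dist_norm minus_complex.sel(1))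
lemma abs_Im_diff: "\<bar>Im p - Im z\<bar> \<le> dist p z"
  by (metis abs_Im_le_cmod dist_norm minus_complex.sel(2))

lemma bdist_DD_ge:
  assumes z: "z \<in> DD"
  shows "(ww (Re z) - \<bar>Im z\<bar>) / 2 \<le> bdist DD z"
  unfolding bdist_def
proof (rule infdist_ge[OF frontier_DD_ne])
  fix p assume p: "p \<in> frontier DD"
  define a where "a = Re z"
  define d where "d = (ww a - \<bar>Im z\<bar>) / 2"
  have a: "0 < a" "a < 1" and b: "\<bar>Im z\<bar> < ww a" using z unfolding DD_def a_def by auto
  have d0: "0 < d" using b by (simp add: d_def)
  have dw: "d \<le> a*(1-a)/8" using ww_le_small[of a] a by (simp add: d_def)
  have "a*(1-a) \<le> a*1" "a*(1-a) \<le> 1*(1-a)" using a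
    by (intro mult_left_mono mult_right_mono; simp)+
  then have u0: "a*(1-a) \<le> a" "a*(1-a) \<le> 1-a" by simp_all
  show "(ww (Re z) - \<bar>Im z\<bar>) / 2 \<le> dist z p"
  proof (rule ccontr)
    assume "\<not> ?thesis"
    then have dl: "dist p z < d" by (simp add: d_def a_def dist_commute)
    have r1: "\<bar>Re p - a\<bar> < d" using abs_Re_diff[of p z] dl a_def by auto
    have i1: "\<bar>Im p - Im z\<bar> < d" using abs_Im_diff[of p z] dl by auto
    have rp: "0 < Re p" "Re p < 1" using r1 dw u0 a d0 by linarith+
    have "\<bar>ww (Re p) - ww a\<bar> \<le> \<bar>Re p - a\<bar> / 2" using ww_lip[of "Re p" a] rp a by auto
    then have "ww (Re p) > ww a - d/2" using r1 by (simp add: abs_if split: if_splits)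
    moreover have "\<bar>Im p\<bar> < \<bar>Im z\<bar> + d" using i1 by auto
    ultimately have "\<bar>Im p\<bar> < ww (Re p)" using d0 unfolding d_def by argo
    moreover have "\<bar>Im p\<bar> = ww (Re p)" using p unfolding frontier_DD by auto
    ultimately show False by simp
  qed
qed

lemma bdist_DD_le:
  assumes z: "z \<in> DD"
  shows "bdist DD z \<le> ww (Re z) - \<bar>Im z\<bar>"
proof -
  define q where "q = Complex (Re z) ((if 0 \<le> Im z then 1 else -1) * ww (Re z))"
  have a: "0 < Re z" "Re z < 1" using z unfolding DD_def by auto
  have "q \<in> frontier DD" unfolding frontier_DD q_def using a ww_nonneg[of "Re z"]
    by auto
  moreover have "dist z q = ww (Re z) - \<bar>Im z\<bar>"
  proof -
    have "z - q = Complex 0 (Im z - (if 0 \<le> Im z then 1 else -1) * ww (Re z))" by (simp add: q_def complex_eq_iff)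
    then have "dist z q = \<bar>Im z - (if 0 \<le> Im z then 1 else -1) * ww (Re z)\<bar>" by (simp add: dist_norm cmod_def)
    also have "\<dots> = ww (Re z) - \<bar>Im z\<bar>" using z unfolding DD_def by auto
    finally show ?thesis .
  qed
  ultimately show ?thesis unfolding bdist_def using infdist_le by metis
qed

lemma bdist_DD_pos: "z \<in> DD \<Longrightarrow> 0 < bdist DD z"
  using bdist_DD_ge[of z] unfolding DD_def by fastforce

lemma key_real:
  fixes da ds wA nu mu P r g dl :: real
  assumes P0: "0 < P" and r0: "0 \<le> r" and hda: "\<bar>da\<bar> \<le> r*P" and hds: "\<bar>ds\<bar> \<le> 2*r*mu"
    and s0: "0 < mu" "mu \<le> nu" and hw: "P \<le> (1+2*r)*(wA*nu)" and w0: "0 < wA"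
    and hg: "g \<le> 3/2*\<bar>da\<bar> + \<bar>ds\<bar>*wA" and hdl: "wA*nu/2 \<le> dl"
  shows "g \<le> (8*r + 8*r^2) * dl"
proof -
  define X where "X = wA*nu"
  have X0: "0 \<le> X" using w0 s0 unfolding X_def by simp
  have h1: "\<bar>da\<bar> \<le> r*((1+2*r)*X)"
    using hda mult_left_mono[OF hw r0] unfolding X_def by linarith
  have "\<bar>ds\<bar> \<le> 2*r*nu" using hds s0 r0 by (meson dual_order.trans mult_left_mono zero_le_mult_iff zero_le_numeral)
  then have h2: "\<bar>ds\<bar>*wA \<le> 2*r*X" unfolding X_def using w0
    by (metis less_eq_real_def mult.assoc mult.commute mult_right_mono)
  have "g \<le> 3/2*(r*((1+2*r)*X)) + 2*r*X" using hg h1 h2 by linarith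
  also have "\<dots> = X*(7/2*r + 3*r^2)" by (simp add: algebra_simps power2_eq_square)
  also have "\<dots> \<le> X*(4*r + 4*r^2)" using X0 r0 by (intro mult_left_mono) auto
  also have "\<dots> = (8*r + 8*r^2) * (X/2)" by (simp add: algebra_simps)
  also have "\<dots> \<le> (8*r + 8*r^2) * dl" using hdl r0 unfolding X_def by (intro mult_left_mono) auto
  finally show ?thesis .
qed

lemma ww_chain[derivative_intros]:
  "(g has_real_derivative g') (at x) \<Longrightarrow> ((\<lambda>x. ww (g x)) has_real_derivative wd (g x) * g') (at x)"
  using DERIV_chain2[OF ww_deriv] by blast

lemma continuous_on_ww[continuous_intros]: "continuous_on S g \<Longrightarrow> continuous_on S (\<lambda>x. ww (g x))"
  unfolding ww_def by (intro continuous_intros)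
lemma continuous_on_wd[continuous_intros]: "continuous_on S g \<Longrightarrow> continuous_on S (\<lambda>x. wd (g x))"
  unfolding wd_def by (intro continuous_intros)

lemma continuous_on_Complex2[continuous_intros]:
  "continuous_on S f \<Longrightarrow> continuous_on S g \<Longrightarrow> continuous_on S (\<lambda>t. Complex (f t) (g t))"
proof -
  assume "continuous_on S f" "continuous_on S g"
  moreover have e: "\<And>a b. Complex a b = of_real a + \<i> * of_real b" by (simp add: complex_eq_iff)
  ultimately show ?thesis unfolding e by (intro continuous_intros)
qed

definition sco :: "complex \<Rightarrow> real" where "sco x = Im x / ww (Re x)"
definition pA :: "complex \<Rightarrow> complex \<Rightarrow> real \<Rightarrow> real" where "pA x y t = (1-t)*Re x + t*Re y"
definition pS :: "complex \<Rightarrow> complex \<Rightarrow> real \<Rightarrow> real" where "pS x y t = (1-t)* sco x + t* sco y"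
definition pth :: "complex \<Rightarrow> complex \<Rightarrow> real \<Rightarrow> complex" where
  "pth x y t = Complex (pA x y t) (pS x y t * ww (pA x y t))"
definition pthd :: "complex \<Rightarrow> complex \<Rightarrow> real \<Rightarrow> complex" where
  "pthd x y t = Complex (Re y - Re x)
     ((sco y - sco x) * ww (pA x y t) + pS x y t * (wd (pA x y t) * (Re y - Re x)))"

lemma pth_deriv: "(pth x y has_vector_derivative pthd x y t) (at t)"
proof -
  have 1: "(pA x y has_real_derivative (Re y - Re x)) (at t)"
    unfolding pA_def by (auto intro!: derivative_eq_intros)
  have 2: "(pS x y has_real_derivative (sco y - sco x)) (at t)"
    unfolding pS_def by (auto intro!: derivative_eq_intros)
  have 3: "((\<lambda>t. pS x y t * ww (pA x y t)) has_real_derivative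
      ((sco y - sco x) * ww (pA x y t) + pS x y t * (wd (pA x y t) * (Re y - Re x)))) (at t)"
    by (rule derivative_eq_intros 2 ww_chain 1 refl)+ (simp add: algebra_simps)
  show ?thesis unfolding pth_def pthd_def fun_eq_iff
    using hvd_complex[OF 1 3] by simp
qed

lemma vd_pth: "vector_derivative (pth x y) (at t) = pthd x y t"
  using pth_deriv vector_derivative_at by blast

lemma cont_pA[continuous_intros]: "continuous_on S (pA x y)"
  unfolding pA_def by (intro continuous_intros)
lemma cont_pS[continuous_intros]: "continuous_on S (pS x y)"
  unfolding pS_def by (intro continuous_intros)

lemma cont_pthd: "continuous_on S (pthd x y)"
  unfolding pthd_def by (intro continuous_intros)

lemma cont_pth: "continuous_on S (pth x y)"
  unfolding pth_def by (intro continuous_intros)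

lemma valid_pth: "valid_path (pth x y)"
  unfolding valid_path_def
  by (rule C1_differentiable_imp_piecewise) (auto simp: C1_differentiable_on_def intro!: exI[of _ "pthd x y"] pth_deriv cont_pthd)

lemma pth_0: "x \<in> DD \<Longrightarrow> pth x y 0 = x"
  unfolding pth_def pA_def pS_def sco_def DD_def by (auto simp: complex_eq_iff)
lemma pth_1: "y \<in> DD \<Longrightarrow> pth x y 1 = y"
  unfolding pth_def pA_def pS_def sco_def DD_def by (auto simp: complex_eq_iff)

lemma sco_lt: "x \<in> DD \<Longrightarrow> \<bar>sco x\<bar> < 1"
  unfolding sco_def DD_def by (auto simp: abs_div)

lemma Im_sco: "x \<in> DD \<Longrightarrow> sco x * ww (Re x) = Im x"
  unfolding sco_def DD_def by auto

lemma conv_bounds: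
  fixes a c t :: real
  assumes "0 \<le> t" "t \<le> 1"
  shows "min a c \<le> (1-t)*a + t*c" "(1-t)*a + t*c \<le> max a c"
proof -
  have "(1-t)*min a c \<le> (1-t)*a" "t*min a c \<le> t*c" using assms by (auto intro: mult_left_mono)
  then show "min a c \<le> (1-t)*a + t*c" by (simp add: algebra_simps)
  have "(1-t)*a \<le> (1-t)*max a c" "t*c \<le> t*max a c" using assms by (auto intro: mult_left_mono)
  then show "(1-t)*a + t*c \<le> max a c" by (simp add: algebra_simps)
qed

lemma abs_pS: "0 \<le> t \<Longrightarrow> t \<le> 1 \<Longrightarrow> \<bar>pS x y t\<bar> \<le> max \<bar>sco x\<bar> \<bar>sco y\<bar>"
proof -
  assume t: "0 \<le> t" "t \<le> 1"
  have "\<bar>pS x y t\<bar> \<le> (1-t)*\<bar>sco x\<bar> + t*\<bar>sco y\<bar>"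
    unfolding pS_def using t by (metis abs_mult abs_of_nonneg abs_triangle_ineq diff_ge_0_iff_ge)
  also have "\<dots> \<le> max \<bar>sco x\<bar> \<bar>sco y\<bar>" using conv_bounds[OF t] by blast
  finally show ?thesis .
qed

lemma ww_conv:
  fixes a c t :: real
  assumes t: "0 \<le> t" "t \<le> 1" and a: "0 \<le> a" "a \<le> 1" and c: "0 \<le> c" "c \<le> 1"
  shows "min (ww a) (ww c) \<le> ww ((1-t)*a + t*c)"
proof -
  define v where "v = (1-t)*a + t*c"
  have "v * (1-v) = (1-t)*(a*(1-a)) + t*(c*(1-c)) + t*(1-t)*(a-c)^2"
    unfolding v_def by (simp add: algebra_simps power2_eq_square)
  moreover have "0 \<le> t*(1-t)*(a-c)^2" using t by simp
  moreover have "min (a*(1-a)) (c*(1-c)) \<le> (1-t)*(a*(1-a)) + t*(c*(1-c))"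
    using conv_bounds[OF t] by blast
  ultimately have 1: "min (a*(1-a)) (c*(1-c)) \<le> v * (1-v)" by linarith
  have 0: "0 \<le> min (a*(1-a)) (c*(1-c))" using a c by simp
  have "(min (a*(1-a)) (c*(1-c)))^2 \<le> (v * (1-v))^2" using power_mono[OF 1 0] .
  moreover have "(min (a*(1-a)) (c*(1-c)))^2 = min (ww a) (ww c)"
    using a c unfolding ww_def by (simp add: min_def power_mono)
  ultimately show ?thesis unfolding ww_def v_def by simp
qed

lemma pA_range: "x \<in> DD \<Longrightarrow> y \<in> DD \<Longrightarrow> 0 \<le> t \<Longrightarrow> t \<le> 1 \<Longrightarrow> 0 < pA x y t \<and> pA x y t < 1"
proof -
  assume h: "x \<in> DD" "y \<in> DD" "0 \<le> t" "t \<le> 1"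
  have "min (Re x) (Re y) \<le> pA x y t" "pA x y t \<le> max (Re x) (Re y)"
    unfolding pA_def using conv_bounds[OF h(3,4)] by auto
  moreover have "0 < min (Re x) (Re y)" "max (Re x) (Re y) < 1" using h unfolding DD_def by auto
  ultimately show ?thesis by linarith
qed

lemma pth_in: "x \<in> DD \<Longrightarrow> y \<in> DD \<Longrightarrow> 0 \<le> t \<Longrightarrow> t \<le> 1 \<Longrightarrow> pth x y t \<in> DD"
proof -
  assume h: "x \<in> DD" "y \<in> DD" "0 \<le> t" "t \<le> 1"
  have a: "0 < pA x y t" "pA x y t < 1" using pA_range[OF h] by auto
  have "\<bar>pS x y t\<bar> < 1" using abs_pS[OF h(3,4), of x y] sco_lt[OF h(1)] sco_lt[OF h(2)] by linarith
  moreover have "0 < ww (pA x y t)" using a ww_pos by auto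
  ultimately have "\<bar>pS x y t * ww (pA x y t)\<bar> < ww (pA x y t)"
    by (simp add: abs_mult)
  then show ?thesis unfolding pth_def DD_def using a by simp
qed

lemma path_connected_DD: "path_connected DD"
  unfolding path_connected_def
proof (intro ballI)
  fix x y assume h: "x \<in> DD" "y \<in> DD"
  show "\<exists>g. path g \<and> path_image g \<subseteq> DD \<and> pathstart g = x \<and> pathfinish g = y"
    by (intro exI[of _ "pth x y"]) (auto simp: path_def cont_pth path_image_def pathstart_def pathfinish_def pth_0 pth_1 h pth_in)
qed

definition phi0 :: "real \<Rightarrow> real" where "phi0 r = 8*r + 8*r^2"

lemma qh_length_nonneg:
  assumes "(\<lambda>t. norm (vector_derivative g (at t)) / bdist G (g t)) integrable_on {0..1}"
  shows "0 \<le> qh_length G g"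
  unfolding qh_length_def
  by (rule integral_nonneg[OF assms]) (simp add: bdist_def infdist_nonneg)

lemma qh_dist_le:
  assumes "valid_path g" "path_image g \<subseteq> G" "pathstart g = x" "pathfinish g = y"
    "(\<lambda>t. norm (vector_derivative g (at t)) / bdist G (g t)) integrable_on {0..1}"
  shows "qh_dist G x y \<le> qh_length G g"
  unfolding qh_dist_def
proof (rule cInf_lower)
  show "qh_length G g \<in> {qh_length G g |g. valid_path g \<and> path_image g \<subseteq> G \<and> pathstart g = x \<and> pathfinish g = y \<and>
      (\<lambda>t. norm (vector_derivative g (at t)) / bdist G (g t)) integrable_on {0..1}}"
    using assms by blast
  show "bdd_below {qh_length G g |g. valid_path g \<and> path_image g \<subseteq> G \<and> pathstart g = x \<and> pathfinish g = y \<and>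
      (\<lambda>t. norm (vector_derivative g (at t)) / bdist G (g t)) integrable_on {0..1}}"
    by (rule bdd_belowI[of _ 0]) (auto intro: qh_length_nonneg)
qed

lemma DD_unif:
  assumes x: "x \<in> DD" and y: "y \<in> DD"
  shows "qh_dist DD x y \<le> phi0 (cmod (x - y) / min (bdist DD x) (bdist DD y))"
proof -
  define M where "M = min (bdist DD x) (bdist DD y)"
  define r where "r = cmod (x - y) / M"
  have M0: "0 < M" using bdist_DD_pos[OF x] bdist_DD_pos[OF y] by (simp add: M_def)
  have r0: "0 \<le> r" using M0 by (simp add: r_def)
  have xy: "cmod (x - y) = r * M" using M0 by (simp add: r_def)
  define wx where "wx = ww (Re x)"
  define wy where "wy = ww (Re y)"
  define sx where "sx = sco x"
  define sy where "sy = sco y"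
  have x01: "0 < Re x" "Re x < 1" using x unfolding DD_def by auto
  have y01: "0 < Re y" "Re y < 1" using y unfolding DD_def by auto
  have wx0: "0 < wx" using x01 ww_pos by (simp add: wx_def)
  have wy0: "0 < wy" using y01 ww_pos by (simp add: wy_def)
  have Imx: "sx * wx = Im x" using Im_sco[OF x] by (simp add: sx_def wx_def)
  have Imy: "sy * wy = Im y" using Im_sco[OF y] by (simp add: sy_def wy_def)
  have sx1: "\<bar>sx\<bar> < 1" using sco_lt[OF x] by (simp add: sx_def)
  have sy1: "\<bar>sy\<bar> < 1" using sco_lt[OF y] by (simp add: sy_def)
  define px where "px = wx * (1 - \<bar>sx\<bar>)"
  define py where "py = wy * (1 - \<bar>sy\<bar>)"
  have aIx: "\<bar>Im x\<bar> = \<bar>sx\<bar> * wx"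
  proof -
    have "\<bar>Im x\<bar> = \<bar>sx * wx\<bar>" using Imx by simp
    also have "\<dots> = \<bar>sx\<bar> * wx" using wx0 by (simp add: abs_mult)
    finally show ?thesis .
  qed
  have px_eq: "px = ww (Re x) - \<bar>Im x\<bar>"
    unfolding px_def aIx by (simp add: algebra_simps wx_def)
  have aIy: "\<bar>Im y\<bar> = \<bar>sy\<bar> * wy"
  proof -
    have "\<bar>Im y\<bar> = \<bar>sy * wy\<bar>" using Imy by simp
    also have "\<dots> = \<bar>sy\<bar> * wy" using wy0 by (simp add: abs_mult)
    finally show ?thesis .
  qed
  have py_eq: "py = ww (Re y) - \<bar>Im y\<bar>"
    unfolding py_def aIy by (simp add: algebra_simps wy_def)
  have Mpx: "M \<le> px" using bdist_DD_le[OF x] px_eq M_def by linarith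
  have Mpy: "M \<le> py" using bdist_DD_le[OF y] py_eq M_def by linarith
  define P where "P = min px py"
  have MP: "M \<le> P" using Mpx Mpy by (simp add: P_def)
  have P0: "0 < P" using M0 MP by linarith
  define da where "da = Re y - Re x"
  define db where "db = Im y - Im x"
  define ds where "ds = sy - sx"
  have rMP: "r * M \<le> r * P" using MP r0 by (rule mult_left_mono)
  have hda: "\<bar>da\<bar> \<le> r*P"
  proof -
    have "\<bar>da\<bar> \<le> cmod (x - y)" unfolding da_def using abs_Re_diff[of y x] by (simp add: dist_norm norm_minus_commute)
    then show ?thesis using xy rMP by linarith
  qed
  have hdb: "\<bar>db\<bar> \<le> r*P"
  proof -
    have "\<bar>db\<bar> \<le> cmod (x - y)" unfolding db_def using abs_Im_diff[of y x] by (simp add: dist_norm norm_minus_commute)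
    then show ?thesis using xy rMP by linarith
  qed
  have wdiff: "\<bar>wx - wy\<bar> \<le> \<bar>da\<bar>/2"
    using ww_lip[of "Re x" "Re y"] x01 y01 unfolding wx_def wy_def da_def by (simp add: abs_minus_commute)
  have rP0: "0 \<le> r * P" using r0 P0 by simp
  have e1: "wx * ds = (wx - wy)* sy + db" unfolding ds_def db_def using Imx Imy by (simp add: algebra_simps)
  have e2: "wy * ds = (wx - wy)* sx + db" unfolding ds_def db_def using Imx Imy by (simp add: algebra_simps)
  have t1: "\<bar>(wx - wy)* sy\<bar> \<le> \<bar>da\<bar>/2"
  proof -
    have "\<bar>(wx - wy)* sy\<bar> = \<bar>wx - wy\<bar>*\<bar>sy\<bar>" by (simp add: abs_mult)
    also have "\<dots> \<le> \<bar>wx - wy\<bar>*1" using sy1 by (intro mult_left_mono) auto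
    finally show ?thesis using wdiff by simp
  qed
  have t2: "\<bar>(wx - wy)* sx\<bar> \<le> \<bar>da\<bar>/2"
  proof -
    have "\<bar>(wx - wy)* sx\<bar> = \<bar>wx - wy\<bar>*\<bar>sx\<bar>" by (simp add: abs_mult)
    also have "\<dots> \<le> \<bar>wx - wy\<bar>*1" using sx1 by (intro mult_left_mono) auto
    finally show ?thesis using wdiff by simp
  qed
  have "wx * \<bar>ds\<bar> \<le> 3/2*(r*P)" using e1 t1 hda hdb abs_triangle_ineq[of "(wx - wy)* sy" db]
    by (simp add: abs_mult) (use wx0 in linarith)
  also have "\<dots> \<le> 3/2*(r*px)" using r0 by (simp add: P_def mult_left_mono)
  finally have "wx * \<bar>ds\<bar> \<le> wx * (3/2*r*(1 - \<bar>sx\<bar>))" by (simp add: px_def algebra_simps)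
  then have dsx: "\<bar>ds\<bar> \<le> 3/2*r*(1 - \<bar>sx\<bar>)" using wx0 by (simp add: mult_le_cancel_left_pos)
  have "wy * \<bar>ds\<bar> \<le> 3/2*(r*P)" using e2 t2 hda hdb abs_triangle_ineq[of "(wx - wy)* sx" db]
    by (simp add: abs_mult) (use wy0 in linarith)
  also have "\<dots> \<le> 3/2*(r*py)" using r0 by (simp add: P_def mult_left_mono)
  finally have "wy * \<bar>ds\<bar> \<le> wy * (3/2*r*(1 - \<bar>sy\<bar>))" by (simp add: py_def algebra_simps)
  then have dsy: "\<bar>ds\<bar> \<le> 3/2*r*(1 - \<bar>sy\<bar>)" using wy0 by (simp add: mult_le_cancel_left_pos)
  define mu where "mu = min (1 - \<bar>sx\<bar>) (1 - \<bar>sy\<bar>)"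
  have mu0: "0 < mu" using sx1 sy1 by (simp add: mu_def)
  have dsmu: "\<bar>ds\<bar> \<le> 3/2*r*mu" using dsx dsy by (simp add: mu_def min_def)
  have rmu0: "0 \<le> r*mu" using r0 mu0 by simp
  have ds2: "\<bar>ds\<bar> \<le> 2*r*mu" using dsmu rmu0 by linarith
  have a1: "\<bar>\<bar>sy\<bar> - \<bar>sx\<bar>\<bar> \<le> \<bar>ds\<bar>" unfolding ds_def by (rule abs_triangle_ineq3)
  have ssd: "\<bar>sy\<bar> - \<bar>sx\<bar> \<le> \<bar>ds\<bar>" "\<bar>sx\<bar> - \<bar>sy\<bar> \<le> \<bar>ds\<bar>"
    using a1 by (simp_all add: abs_le_iff)
  have muc: "mu = 1 - \<bar>sx\<bar> \<or> mu = 1 - \<bar>sy\<bar>" "mu \<le> 1 - \<bar>sx\<bar>" "mu \<le> 1 - \<bar>sy\<bar>"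
    unfolding mu_def by (auto simp: min_def)
  have e3: "(1+2*r)*mu = mu + 2*r*mu" by (simp add: algebra_simps)
  have sxm: "1 - \<bar>sx\<bar> \<le> (1+2*r)*mu"
    unfolding e3 using muc ssd ds2 rmu0 by linarith
  have sym: "1 - \<bar>sy\<bar> \<le> (1+2*r)*mu"
    unfolding e3 using muc ssd ds2 rmu0 by linarith
  have Pbx: "P \<le> (1+2*r)*(wx*mu)"
  proof -
    have "P \<le> px" by (simp add: P_def)
    also have "\<dots> \<le> wx*((1+2*r)*mu)" unfolding px_def using sxm wx0 by (intro mult_left_mono) auto
    finally show ?thesis by (simp add: algebra_simps)
  qed
  have Pby: "P \<le> (1+2*r)*(wy*mu)"
  proof -
    have "P \<le> py" by (simp add: P_def)
    also have "\<dots> \<le> wy*((1+2*r)*mu)" unfolding py_def using sym wy0 by (intro mult_left_mono) auto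
    finally show ?thesis by (simp add: algebra_simps)
  qed
  define f where "f = (\<lambda>t. cmod (vector_derivative (pth x y) (at t)) / bdist DD (pth x y t))"
  have fbound: "f t \<le> phi0 r" if t: "0 \<le> t" "t \<le> 1" for t
  proof -
    define A where "A = pA x y t"
    define wA where "wA = ww A"
    define nu where "nu = 1 - \<bar>pS x y t\<bar>"
    have A01: "0 < A" "A < 1" using pA_range[OF x y t] by (auto simp: A_def)
    have wA0: "0 < wA" using A01 ww_pos by (simp add: wA_def)
    have wAm: "min wx wy \<le> wA" unfolding wA_def A_def pA_def wx_def wy_def
      using ww_conv[OF t, of "Re x" "Re y"] x01 y01 by simp
    have numu: "mu \<le> nu" unfolding nu_def mu_def using abs_pS[OF t, of x y] by (simp add: sx_def sy_def)
    have hw: "P \<le> (1+2*r)*(wA*nu)"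
    proof -
      have "P \<le> (1+2*r)*(min wx wy*mu)" using Pbx Pby by (simp add: min_def)
      also have "\<dots> \<le> (1+2*r)*(wA*nu)" using wAm numu mu0 wx0 wy0 r0
        by (intro mult_left_mono mult_mono) auto
      finally show ?thesis .
    qed
    have pS1: "\<bar>pS x y t\<bar> \<le> 1" using abs_pS[OF t, of x y] sx1 sy1 by (simp add: sx_def sy_def)
    have hwd: "\<bar>wd A\<bar> \<le> 1/2" using wd_bound A01 by simp
    have hg: "cmod (pthd x y t) \<le> 3/2*\<bar>da\<bar> + \<bar>ds\<bar>*wA"
    proof -
      have "cmod (pthd x y t) \<le> \<bar>da\<bar> + \<bar>ds * wA + pS x y t * (wd A * da)\<bar>"
        using cmod_le[of "pthd x y t"] by (simp add: pthd_def da_def ds_def sx_def sy_def A_def wA_def)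
      also have "\<bar>ds * wA + pS x y t * (wd A * da)\<bar> \<le> \<bar>ds\<bar> * wA + \<bar>pS x y t\<bar> * (\<bar>wd A\<bar> * \<bar>da\<bar>)"
        using wA0 by (metis abs_mult abs_of_pos abs_triangle_ineq)
      also have "\<bar>pS x y t\<bar> * (\<bar>wd A\<bar> * \<bar>da\<bar>) \<le> 1 * (1/2 * \<bar>da\<bar>)"
        using pS1 hwd by (intro mult_mono) auto
      finally show ?thesis by simp
    qed
    have hdl: "wA*nu/2 \<le> bdist DD (pth x y t)"
    proof -
      have "(ww (Re (pth x y t)) - \<bar>Im (pth x y t)\<bar>)/2 \<le> bdist DD (pth x y t)"
        using bdist_DD_ge[OF pth_in[OF x y t]] .
      moreover have "ww (Re (pth x y t)) - \<bar>Im (pth x y t)\<bar> = wA*nu"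
        unfolding pth_def nu_def wA_def A_def using wA0 by (simp add: abs_mult algebra_simps A_def wA_def)
      ultimately show ?thesis by simp
    qed
    have dl0: "0 < bdist DD (pth x y t)" using bdist_DD_pos[OF pth_in[OF x y t]] .
    have "cmod (pthd x y t) \<le> phi0 r * bdist DD (pth x y t)"
      unfolding phi0_def
      by (rule key_real[OF P0 r0 hda ds2 mu0 numu hw wA0 hg hdl])
    then show ?thesis unfolding f_def vd_pth using dl0 by (simp add: pos_divide_le_eq)
  qed
  have fint: "f integrable_on {0..1}"
  proof -
    have "continuous_on {0..1} (\<lambda>t. cmod (pthd x y t) / bdist DD (pth x y t))"
      unfolding bdist_def
      using bdist_DD_pos[OF pth_in[OF x y]] unfolding bdist_def
      by (intro continuous_intros cont_pthd cont_pth) (metis atLeastAtMost_iff less_irrefl)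
    then show ?thesis unfolding f_def vd_pth by (rule integrable_continuous_interval)
  qed
  have "qh_length DD (pth x y) \<le> phi0 r"
  proof -
    have "qh_length DD (pth x y) = integral {0..1} f" unfolding qh_length_def f_def ..
    also have "\<dots> \<le> integral {0..1} (\<lambda>_::real. phi0 r)"
      using fint fbound by (intro Henstock_Kurzweil_Integration.integral_le) auto
    also have "\<dots> = phi0 r" by simp
    finally show ?thesis .
  qed
  moreover have "qh_dist DD x y \<le> qh_length DD (pth x y)"
  proof (rule qh_dist_le)
    show "valid_path (pth x y)" by (rule valid_pth)
    show "path_image (pth x y) \<subseteq> DD" using pth_in[OF x y] by (auto simp: path_image_def)
    show "pathstart (pth x y) = x" using pth_0[OF x] by (simp add: pathstart_def)
    show "pathfinish (pth x y) = y" using pth_1[OF y] by (simp add: pathfinish_def)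
    show "(\<lambda>t. cmod (vector_derivative (pth x y) (at t)) / bdist DD (pth x y t)) integrable_on {0..1}"
      using fint unfolding f_def .
  qed
  ultimately show ?thesis unfolding M_def[symmetric] r_def[symmetric] by linarith
qed

lemma Re_cnj_mult_le: "Re (cnj w * v) \<le> cmod w * cmod v"
  by (metis abs_Re_le_cmod abs_le_D1 complex_mod_cnj norm_mult)

lemma qh_lower:
  fixes g :: "real \<Rightarrow> complex"
  assumes vp: "valid_path g" and img: "path_image g \<subseteq> G" and st: "pathstart g = x"
    and int: "(\<lambda>t. cmod (vector_derivative g (at t)) / bdist G (g t)) integrable_on {0..1}"
    and pos: "\<And>z. z \<in> G \<Longrightarrow> 0 < bdist G z"
    and s0: "0 \<le> s0" "s0 \<le> 1" and R: "R \<le> cmod (g s0 - x)" "0 \<le> R"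
    and d: "d = bdist G x" "0 < d"
  shows "ln (1 + R^2/d^2) \<le> 3 * qh_length G g"
proof -
  obtain S where fin: "finite S" and C1: "g C1_differentiable_on {0..1} - S" and cg: "continuous_on {0..1} g"
    using vp unfolding valid_path_def piecewise_C1_differentiable_on_def by blast
  have gd: "(g has_vector_derivative vector_derivative g (at u)) (at u)" if "u \<in> {0..1} - S" for u
    using C1 that unfolding C1_differentiable_on_eq by (auto intro: vector_derivative_works[THEN iffD1])
  define f where "f = (\<lambda>t. cmod (vector_derivative g (at t)) / bdist G (g t))"
  define N where "N = (\<lambda>u. (Re (g u) - Re x)^2 + (Im (g u) - Im x)^2)"
  define F where "F = (\<lambda>u. ln (d^2 + N u))"
  define F' where "F' = (\<lambda>u. (2 * (Re (g u) - Re x) * Re (vector_derivative g (at u))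
      + 2 * (Im (g u) - Im x) * Im (vector_derivative g (at u))) / (d^2 + N u))"
  have N0: "0 \<le> N u" for u by (simp add: N_def)
  have Nc: "N u = (cmod (g u - x))^2" for u by (simp add: N_def cmod_def)
  have Q0: "0 < d^2 + N u" for u using N0[of u] d by (simp add: add_pos_nonneg)
  have Fd: "(F has_vector_derivative F' u) (at u)" if "u \<in> {0..s0} - S" for u
  proof -
    have u1: "u \<in> {0..1} - S" using that s0 by auto
    note gdu = gd[OF u1]
    have Nd: "((\<lambda>u. d^2 + N u) has_real_derivative
        (2 * (Re (g u) - Re x) * Re (vector_derivative g (at u))
         + 2 * (Im (g u) - Im x) * Im (vector_derivative g (at u)))) (at u)"
      unfolding N_def
      by (auto intro!: derivative_eq_intros gdu simp: algebra_simps)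
    have "(F has_real_derivative F' u) (at u)"
      using DERIV_chain2[OF DERIV_ln_divide[OF Q0[of u]] Nd] unfolding F_def F'_def by simp
    then show ?thesis by (simp add: has_real_derivative_iff_has_vector_derivative)
  qed
  have cF: "continuous_on {0..s0} F"
  proof -
    have "continuous_on {0..s0} g" using s0 by (intro continuous_on_subset[OF cg]) auto
    moreover have Qne: "\<And>u. d^2 + N u \<noteq> 0" using Q0 by (metis less_irrefl)
    ultimately show ?thesis unfolding F_def using Qne unfolding N_def
      by (intro continuous_intros) auto
  qed
  have ftc: "(F' has_integral (F s0 - F 0)) {0..s0}"
    by (rule fundamental_theorem_of_calculus_strong[OF fin s0(1) _ cF]) (use Fd in auto)
  have fint0: "f integrable_on {0..s0}" unfolding f_def by (rule integrable_on_subinterval[OF int]) (use s0 in auto)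
  have fnn: "0 \<le> f u" for u unfolding f_def bdist_def by (simp add: infdist_nonneg)
  have Fle: "F' u \<le> 3 * f u" if u: "u \<in> {0..s0}" for u
  proof -
    define V where "V = vector_derivative g (at u)"
    define w where "w = g u - x"
    define \<rho> where "\<rho> = cmod w"
    have gu: "g u \<in> G" using img u s0 by (auto simp: path_image_def)
    define B where "B = bdist G (g u)"
    have B0: "0 < B" using pos[OF gu] by (simp add: B_def)
    have Bl: "B \<le> d + \<rho>" unfolding B_def d \<rho>_def w_def bdist_def
      using infdist_triangle[of "g u" "frontier G" x] by (simp add: dist_norm)
    have r0: "0 \<le> \<rho>" by (simp add: \<rho>_def)
    have Q: "d^2 + N u = d^2 + \<rho>^2" by (simp add: Nc \<rho>_def w_def)
    have num: "2 * (Re (g u) - Re x) * Re V + 2 * (Im (g u) - Im x) * Im V = 2 * Re (cnj w * V)"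
      by (simp add: w_def algebra_simps)
    have F'eq: "F' u = 2 * Re (cnj w * V) / (d^2 + \<rho>^2)"
      unfolding F'_def V_def[symmetric] num Q ..
    have Qp: "0 < d^2 + \<rho>^2" using d by (simp add: add_pos_nonneg)
    have "F' u \<le> 2 * (\<rho> * cmod V) / (d^2 + \<rho>^2)"
      unfolding F'eq using Re_cnj_mult_le[of w V] Qp \<rho>_def by (simp add: divide_right_mono)
    also have "\<dots> \<le> 3 * cmod V / (d + \<rho>)"
    proof -
      have k: "2*\<rho>*(d+\<rho>) \<le> 3*(d^2+\<rho>^2)"
      proof -
        have "0 \<le> 2*d^2 + (d - \<rho>)^2" by simp
        then show ?thesis by (simp add: power2_eq_square algebra_simps)
      qed
      have dp: "0 < d + \<rho>" using d r0 by linarith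
      have "2*\<rho>*(d+\<rho>) * cmod V \<le> 3*(d^2+\<rho>^2) * cmod V" using k by (rule mult_right_mono) simp
      then have "2*(\<rho>*cmod V)*(d+\<rho>) \<le> 3*cmod V*(d^2+\<rho>^2)" by (simp add: algebra_simps)
      then have "2*(\<rho>*cmod V) \<le> 3*cmod V*(d^2+\<rho>^2)/(d+\<rho>)" by (simp add: pos_le_divide_eq dp)
      then have "2*(\<rho>*cmod V)/(d^2+\<rho>^2) \<le> 3*cmod V*(d^2+\<rho>^2)/(d+\<rho>)/(d^2+\<rho>^2)"
        by (rule divide_right_mono) (use Qp in auto)
      also have "\<dots> = 3*cmod V/(d+\<rho>)" using Qp by simp
      finally show ?thesis .
    qed
    also have "\<dots> \<le> 3 * cmod V / B"
      using B0 Bl by (intro divide_left_mono) (auto intro: mult_pos_pos)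
    finally show ?thesis by (simp add: f_def V_def B_def)
  qed
  have "F s0 - F 0 \<le> integral {0..s0} (\<lambda>u. 3 * f u)"
    using has_integral_le[OF ftc integrable_integral[OF integrable_on_cmult_left[OF fint0, of 3]]] Fle
    by (simp add: mult.commute)
  also have "\<dots> = 3 * integral {0..s0} f" by simp
  also have "\<dots> \<le> 3 * integral {0..1} f"
    using integral_subset_le[of "{0..s0}" "{0..1}" f] fint0 int s0 fnn unfolding f_def by auto
  also have "\<dots> = 3 * qh_length G g" unfolding qh_length_def f_def ..
  finally have main: "F s0 - F 0 \<le> 3 * qh_length G g" .
  have g0: "g 0 = x" using st by (simp add: pathstart_def)
  have "F 0 = ln (d^2)" by (simp add: F_def N_def g0)
  moreover have "ln (d^2 + R^2) \<le> F s0"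
  proof -
    have "R^2 \<le> N s0" unfolding Nc using R by (simp add: power_mono)
    moreover have "0 < d^2 + R^2" using d(2) by (simp add: add_pos_nonneg)
    ultimately show ?thesis unfolding F_def using Q0[of s0] by (subst ln_le_cancel_iff) auto
  qed
  moreover have "ln (1 + R^2/d^2) = ln (d^2 + R^2) - ln (d^2)"
  proof -
    have "1 + R^2/d^2 = (d^2 + R^2)/d^2" using d by (simp add: field_simps)
    then show ?thesis using d by (simp add: ln_div add_pos_nonneg)
  qed
  ultimately show ?thesis using main by linarith
qed

lemma bounded_DD: "bounded DD"
proof (rule bounded_subset[OF bounded_cball[of 0 2]])
  show "DD \<subseteq> cball 0 2"
  proof
    fix z assume z: "z \<in> DD"
    then have "0 < Re z" "Re z < 1" "\<bar>Im z\<bar> < ww (Re z)" unfolding DD_def by auto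
    moreover have "ww (Re z) \<le> (Re z)^2" using ww_le_sq calculation by auto
    moreover have "(Re z)^2 \<le> 1" using calculation by (simp add: power_le_one)
    ultimately have "\<bar>Re z\<bar> + \<bar>Im z\<bar> \<le> 2" by auto
    then show "z \<in> cball 0 2" using cmod_le[of z] by simp
  qed
qed

definition g1 :: "real \<Rightarrow> complex" where "g1 t = Complex t (ww t)"
definition g2 :: "real \<Rightarrow> complex" where "g2 t = Complex (1-t) (- ww (1-t))"

lemma arc_g1: "arc g1"
  unfolding arc_def path_def g1_def
  by (auto intro!: continuous_intros inj_onI simp: complex_eq_iff)

lemma arc_g2: "arc g2"
  unfolding arc_def path_def g2_def
  by (auto intro!: continuous_intros inj_onI simp: complex_eq_iff)

lemma ends: "pathstart g1 = 0" "pathfinish g1 = 1" "pathstart g2 = 1" "pathfinish g2 = 0"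
  by (auto simp: pathstart_def pathfinish_def g1_def g2_def ww_def complex_eq_iff)

lemma img_g1: "path_image g1 = {z. 0 \<le> Re z \<and> Re z \<le> 1 \<and> Im z = ww (Re z)}"
  unfolding path_image_def g1_def
  by (auto simp: image_iff complex_eq_iff intro!: bexI[where x="Re _"])

lemma img_g2: "path_image g2 = {z. 0 \<le> Re z \<and> Re z \<le> 1 \<and> Im z = - ww (Re z)}"
proof -
  have "\<And>z. 0 \<le> Re z \<Longrightarrow> Re z \<le> 1 \<Longrightarrow> Im z = - ww (Re z) \<Longrightarrow> z \<in> g2 ` {0..1}"
  proof -
    fix z assume h: "0 \<le> Re z" "Re z \<le> 1" "Im z = - ww (Re z)"
    have "z = g2 (1 - Re z)" using h by (simp add: g2_def complex_eq_iff)
    moreover have "1 - Re z \<in> {0..1}" using h by simp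
    ultimately show "z \<in> g2 ` {0..1}" by blast
  qed
  then show ?thesis unfolding path_image_def by (auto simp: g2_def)
qed

lemma jordan_DD: "jordan_domain DD"
  unfolding jordan_domain_def
proof (intro conjI exI)
  show "is_domain DD"
    unfolding is_domain_def
  proof (intro conjI)
    show "open DD" by (rule open_DD)
    show "connected DD" by (rule path_connected_imp_connected[OF path_connected_DD])
    have "Complex (1/2) 0 \<in> DD" unfolding DD_def by (simp add: ww_def)
    then show "DD \<noteq> {}" by blast
  qed
  show "jordan_curve (g1 +++ g2)"
    unfolding jordan_curve_def
  proof
    show "simple_path (g1 +++ g2)"
    proof (rule simple_path_join_loop[OF arc_g1 arc_g2])
      show "pathfinish g1 = pathstart g2" "pathfinish g2 = pathstart g1" using ends by auto
      show "path_image g1 \<inter> path_image g2 \<subseteq> {pathstart g1, pathstart g2}"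
      proof
        fix z assume "z \<in> path_image g1 \<inter> path_image g2"
        then have h: "0 \<le> Re z" "Re z \<le> 1" "Im z = ww (Re z)" "Im z = - ww (Re z)"
          unfolding img_g1 img_g2 by auto
        then have "ww (Re z) = 0" by simp
        then have "Re z = 0 \<or> Re z = 1" using ww_pos[of "Re z"] h by force
        then show "z \<in> {pathstart g1, pathstart g2}" using h ends
          by (auto simp: complex_eq_iff ww_def)
      qed
    qed
    show "pathfinish (g1 +++ g2) = pathstart (g1 +++ g2)" using ends by simp
  qed
  show "frontier DD = path_image (g1 +++ g2)"
    unfolding path_image_join[OF ends(2)[unfolded ends(3)[symmetric]]] frontier_DD img_g1 img_g2
    by (auto simp: abs_eq_iff' ww_nonneg)
qed

definition psi0 :: "real \<Rightarrow> real" where "psi0 y = (sqrt (1 + y/2) - 1)/2"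

lemma psi_phi: "0 \<le> r \<Longrightarrow> psi0 (phi0 r) = r"
proof -
  assume r: "0 \<le> r"
  have "1 + phi0 r/2 = (1+2*r)^2" by (simp add: phi0_def power2_eq_square algebra_simps)
  then have "sqrt (1 + phi0 r/2) = 1 + 2*r" using r by simp
  then show ?thesis by (simp add: psi0_def)
qed

lemma phi_psi: "0 \<le> y \<Longrightarrow> phi0 (psi0 y) = y"
proof -
  assume y: "0 \<le> y"
  define S where "S = sqrt (1 + y/2)"
  have S2: "S^2 = 1 + y/2" using y by (simp add: S_def)
  have "phi0 (psi0 y) = 8*((S - 1)/2) + 8*((S - 1)/2)^2"
    by (simp add: phi0_def psi0_def S_def[symmetric])
  also have "\<dots> = 2*(S^2 - 1)"
    by (simp add: power2_eq_square field_simps)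
  finally show ?thesis using S2 by simp
qed

lemma control_phi0: "control_fun phi0"
  unfolding control_fun_def
proof (intro conjI exI)
  show "strict_mono_on {0..} phi0"
  proof (rule strict_mono_onI)
    fix a b :: real assume "a \<in> {0..}" "b \<in> {0..}" "a < b"
    then have "a^2 < b^2" by (simp add: power_strict_mono)
    then show "phi0 a < phi0 b" using \<open>a < b\<close> by (simp add: phi0_def)
  qed
  show "phi0 0 = 0" by (simp add: phi0_def)
  show "homeomorphism {0..} {0..} phi0 psi0"
  proof (rule homeomorphismI)
    show "continuous_on {0..} phi0" unfolding phi0_def by (intro continuous_intros)
    show "continuous_on {0..} psi0" unfolding psi0_def by (intro continuous_intros) auto
    show "phi0 ` {0..} \<subseteq> {0..}" by (auto simp: phi0_def)
    show "psi0 ` {0..} \<subseteq> {0..}" by (auto simp: psi0_def)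
    show "\<And>x. x \<in> {0..} \<Longrightarrow> psi0 (phi0 x) = x" using psi_phi by auto
    show "\<And>y. y \<in> {0..} \<Longrightarrow> phi0 (psi0 y) = y" using phi_psi by auto
  qed
qed

lemma DD_phi_uniform: "phi_uniform phi0 DD"
  unfolding phi_uniform_def using DD_unif by blast

lemma open_GG: "open (- CC)" using closed_CC by (simp add: open_Compl)

lemma frontier_GG_sub: "frontier (- CC) \<subseteq> CC"
  using frontier_subset_closed[OF closed_CC] by simp

lemma fpt: assumes "0 \<le> t" "t \<le> 1" shows "Complex t (- ww t) \<in> frontier (- CC)"
proof -
  have inC: "Complex t (- ww t) \<in> CC" using assms ww_nonneg[of t] unfolding CC_def by simp
  have "Complex t (- ww t) \<in> closure (- CC)"
    unfolding closure_approachable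
  proof (intro allI impI)
    fix e :: real assume e: "0 < e"
    have "Complex t (- ww t - e/2) \<notin> CC" using e ww_nonneg[of t] unfolding CC_def by auto
    moreover have "dist (Complex t (- ww t - e/2)) (Complex t (- ww t)) < e"
      using e by (simp add: dist_norm cmod_def)
    ultimately show "\<exists>y\<in>- CC. dist y (Complex t (- ww t)) < e" by blast
  qed
  then show ?thesis using inC open_GG by (simp add: frontier_def interior_open)
qed

lemma frontier_GG_ne: "frontier (- CC) \<noteq> {}" using fpt[of 0] by auto

lemma bdist_GG_pos: "z \<in> - CC \<Longrightarrow> 0 < bdist (- CC) z"
  unfolding bdist_def
  by (rule infdist_pos_not_in_closed[OF frontier_closed frontier_GG_ne]) (use frontier_GG_sub in auto)

lemma far:
  assumes t: "0 < t" "t \<le> 1/4" and z: "Re z = t" "\<bar>Im z\<bar> = 2*t^2"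
  shows "t^2/4 \<le> bdist (- CC) z"
  unfolding bdist_def
proof (rule infdist_ge[OF frontier_GG_ne])
  fix p assume "p \<in> frontier (- CC)"
  then have p: "p \<in> CC" using frontier_GG_sub by auto
  show "t^2/4 \<le> dist z p"
  proof (rule ccontr)
    assume "\<not> ?thesis"
    then have dl: "dist p z < t^2/4" by (simp add: dist_commute)
    have r1: "\<bar>Re p - t\<bar> < t^2/4" using abs_Re_diff[of p z] dl z by auto
    have i1: "\<bar>Im p - Im z\<bar> < t^2/4" using abs_Im_diff[of p z] dl by auto
    have p0: "0 \<le> Re p" "Re p \<le> 1" "\<bar>Im p\<bar> \<le> ww (Re p)" using p unfolding CC_def by auto
    have "t^2/4 \<le> t/16"
    proof -
      have "t*t \<le> t*(1/4)" using t by (intro mult_left_mono) auto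
      then show ?thesis by (simp add: power2_eq_square)
    qed
    then have rp: "Re p \<le> 17/16*t" using r1 by (simp add: abs_if split: if_splits)
    have "(Re p)^2 \<le> (17/16*t)^2" using power_mono[OF rp p0(1)] .
    also have "\<dots> = 289/256*t^2" by (simp add: power2_eq_square)
    finally have "\<bar>Im p\<bar> \<le> 289/256*t^2" using p0 ww_le_sq[of "Re p"] by linarith
    moreover have "\<bar>Im p\<bar> > 7/4*t^2" using i1 z(2) by (simp add: abs_if split: if_splits)
    moreover have "0 < t^2" using t by simp
    ultimately show False by linarith
  qed
qed

definition hh :: "real \<Rightarrow> real \<Rightarrow> complex" where
  "hh t s = Complex (t - 6*t* s*(1-s)) (- 2*t^2 + 4*t^2* s)"
definition hhd :: "real \<Rightarrow> real \<Rightarrow> complex" where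
  "hhd t s = Complex (- 6*t*(1 - 2* s)) (4*t^2)"

lemma hh_deriv: "(hh t has_vector_derivative hhd t s) (at s)"
  unfolding hh_def hhd_def
  by (rule hvd_complex) (auto intro!: derivative_eq_intros simp: algebra_simps)

lemma vd_hh: "vector_derivative (hh t) (at s) = hhd t s"
  using hh_deriv vector_derivative_at by blast

lemma cont_hh: "continuous_on S (hh t)" unfolding hh_def by (intro continuous_intros)
lemma cont_hhd: "continuous_on S (hhd t)" unfolding hhd_def by (intro continuous_intros)

lemma valid_hh: "valid_path (hh t)"
  unfolding valid_path_def
  by (rule C1_differentiable_imp_piecewise) (auto simp: C1_differentiable_on_def intro!: exI[of _ "hhd t"] hh_deriv cont_hhd)

lemma hh_out:
  assumes t: "0 < t" "t \<le> 1/4" and s: "0 \<le> s" "s \<le> 1"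
  shows "hh t s \<in> - CC"
proof
  assume inC: "hh t s \<in> CC"
  define a where "a = t - 6*t* s*(1-s)"
  have a0: "0 \<le> a" and i: "\<bar>- 2*t^2 + 4*t^2* s\<bar> \<le> ww a" and a1: "a \<le> 1"
    using inC unfolding CC_def hh_def a_def by auto
  have ss: "0 \<le> s*(1-s)" using s by simp
  have "0 \<le> 6*t*(s*(1-s))" using ss t by simp
  then have "a \<le> t" unfolding a_def by (simp add: mult.assoc)
  then have "a^2 \<le> t^2" using a0 by (simp add: power_mono)
  then have "\<bar>- 2*t^2 + 4*t^2* s\<bar> \<le> t^2" using i ww_le_sq[OF a0 a1] by linarith
  moreover have "\<bar>- 2*t^2 + 4*t^2* s\<bar> = t^2 * \<bar>4* s - 2\<bar>"
  proof -
    have "- 2*t^2 + 4*t^2* s = t^2 * (4* s - 2)" by (simp add: algebra_simps)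
    then show ?thesis by (simp add: abs_mult)
  qed
  ultimately have "t^2 * \<bar>4* s - 2\<bar> \<le> t^2 * 1" by simp
  then have "\<bar>4* s - 2\<bar> \<le> 1" using t by (simp add: mult_le_cancel_left_pos)
  then have s2: "1/4 \<le> s" "s \<le> 3/4" by (auto simp: abs_if split: if_splits)
  have "3/16 \<le> s*(1-s)"
  proof -
    have "0 \<le> (s - 1/4)*(3/4 - s)" using s2 by simp
    then show ?thesis by (simp add: algebra_simps) argo
  qed
  then have "6*t*(3/16) \<le> 6*t*(s*(1-s))" using t by (intro mult_left_mono) auto
  then have "a < 0" unfolding a_def using t by (simp add: algebra_simps)
  then show False using a0 by simp
qed

lemma crossing:
  assumes t: "0 < t" "t \<le> 1/4" and vp: "valid_path g" and img: "path_image g \<subseteq> - CC"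
    and g0: "g 0 = Complex t (- 2*t^2)" and g1: "g 1 = Complex t (2*t^2)"
  shows "\<exists>s0. 0 \<le> s0 \<and> s0 \<le> 1 \<and> t \<le> cmod (g s0 - Complex t (- 2*t^2))"
proof (rule ccontr)
  assume "\<not> ?thesis"
  then have cl: "\<And>s. 0 \<le> s \<Longrightarrow> s \<le> 1 \<Longrightarrow> cmod (g s - Complex t (- 2*t^2)) < t" by force
  have cg: "continuous_on {0..1} g" using valid_path_imp_path[OF vp] by (simp add: path_def)
  then have "continuous_on {0..1} (\<lambda>s. Im (g s))" by (intro continuous_intros)
  moreover have "Im (g 0) \<le> 0" "0 \<le> Im (g 1)" using g0 g1 by auto
  ultimately obtain s where s: "0 \<le> s" "s \<le> 1" "Im (g s) = 0"
    using IVT'[of "\<lambda>s. Im (g s)" 0 0 1] by auto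
  have "\<bar>Re (g s) - t\<bar> < t" using cl[OF s(1,2)] abs_Re_le_cmod[of "g s - Complex t (- 2*t^2)"] by simp
  then have r: "0 < Re (g s)" "Re (g s) < 1" using t by (auto simp: abs_if split: if_splits)
  then have "g s \<in> CC" using s(3) ww_nonneg unfolding CC_def by simp
  moreover have "g s \<in> path_image g" using s by (simp add: path_image_def)
  then have "g s \<in> - CC" using img by blast
  ultimately show False by simp
qed

lemma ext_not_uniform: "\<not> (\<exists>\<psi>. control_fun \<psi> \<and> phi_uniform \<psi> (- closure DD))"
proof
  assume "\<exists>\<psi>. control_fun \<psi> \<and> phi_uniform \<psi> (- closure DD)"
  then obtain \<psi> where cf: "control_fun \<psi>" and pu0: "phi_uniform \<psi> (- closure DD)" by blast
  have pu: "phi_uniform \<psi> (- CC)" using pu0 closure_DD by simp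
  have sm: "strict_mono_on {0..} \<psi>" and p0: "\<psi> 0 = 0" using cf unfolding control_fun_def by auto
  define K where "K = \<psi> 16"
  have K0: "0 \<le> K" using strict_mono_onD[OF sm, of 0 16] p0 by (simp add: K_def)
  define t where "t = min (1/4) (exp (- (3*K+1)))"
  have t0: "0 < t" and t1: "t \<le> 1/4" and te: "t \<le> exp (- (3*K+1))" by (auto simp: t_def)
  define x where "x = Complex t (- 2*t^2)"
  define y where "y = Complex t (2*t^2)"
  have wt: "ww t \<le> t^2" using ww_le_sq[of t] t0 t1 by simp
  have tt: "0 < t^2" using t0 by simp
  have lt: "ww t < 2*t^2" using wt tt by linarith
  have xG: "x \<in> - CC" unfolding x_def CC_def using lt by auto
  have yG: "y \<in> - CC" unfolding y_def CC_def using lt by auto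
  define dx where "dx = bdist (- CC) x"
  define dy where "dy = bdist (- CC) y"
  have dxl: "t^2/4 \<le> dx" unfolding dx_def by (rule far[OF t0 t1]) (simp_all add: x_def)
  have dyl: "t^2/4 \<le> dy" unfolding dy_def by (rule far[OF t0 t1]) (simp_all add: y_def)
  have dx0: "0 < dx" using dxl tt by linarith
  have dxu: "dx \<le> 2*t^2"
  proof -
    have "Complex t (- ww t) \<in> frontier (- CC)" using fpt t0 t1 by simp
    moreover have "dist x (Complex t (- ww t)) \<le> 2*t^2"
    proof -
      have "x - Complex t (- ww t) = Complex 0 (ww t - 2*t^2)" by (simp add: x_def complex_eq_iff)
      then have "dist x (Complex t (- ww t)) = \<bar>ww t - 2*t^2\<bar>" by (simp add: dist_norm cmod_def)
      also have "\<dots> \<le> 2*t^2" using wt ww_nonneg[of t] tt by (simp add: abs_if)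
      finally show ?thesis .
    qed
    ultimately show ?thesis unfolding dx_def bdist_def by (rule infdist_le2)
  qed
  define m where "m = min dx dy"
  have m0: "t^2/4 \<le> m" using dxl dyl by (simp add: m_def)
  have mp: "0 < m" using m0 tt by linarith
  have cxy: "cmod (x - y) = 4*t^2"
  proof -
    have "x - y = Complex 0 (- 4*t^2)" by (simp add: x_def y_def complex_eq_iff)
    then have "cmod (x - y) = \<bar>- 4*t^2\<bar>" using cmod_eq_Im[of "x - y"] by simp
    then show ?thesis by simp
  qed
  define \<rho> where "\<rho> = cmod (x - y) / m"
  have rho0: "0 \<le> \<rho>" using mp by (simp add: \<rho>_def)
  have rho16: "\<rho> \<le> 16"
  proof -
    have "4*t^2 \<le> 16*m" using m0 by linarith
    then show ?thesis unfolding \<rho>_def cxy using mp by (simp add: divide_le_eq)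
  qed
  have "\<psi> \<rho> \<le> K" unfolding K_def using strict_mono_on_leD[OF sm, of \<rho> 16] rho0 rho16 by simp
  moreover have "qh_dist (- CC) x y \<le> \<psi> \<rho>"
    using pu xG yG unfolding phi_uniform_def \<rho>_def m_def dx_def dy_def by blast
  moreover have "(3*K+1)/3 \<le> qh_dist (- CC) x y"
    unfolding qh_dist_def
  proof (rule cInf_greatest)
    have cont: "continuous_on {0..1} (\<lambda>s. cmod (hhd t s) / bdist (- CC) (hh t s))"
      using bdist_GG_pos[OF hh_out[OF t0 t1]] unfolding bdist_def
      by (intro continuous_intros cont_hh cont_hhd) (metis atLeastAtMost_iff less_irrefl)
    have "qh_length (- CC) (hh t) \<in> {qh_length (- CC) g |g. valid_path g \<and> path_image g \<subseteq> - CC \<and>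
        pathstart g = x \<and> pathfinish g = y \<and>
        (\<lambda>t. cmod (vector_derivative g (at t)) / bdist (- CC) (g t)) integrable_on {0..1}}"
    proof (intro CollectI exI conjI)
      show "valid_path (hh t)" by (rule valid_hh)
      show "path_image (hh t) \<subseteq> - CC" using hh_out[OF t0 t1] by (auto simp: path_image_def)
      show "pathstart (hh t) = x" by (simp add: pathstart_def hh_def x_def)
      show "pathfinish (hh t) = y" by (simp add: pathfinish_def hh_def y_def)
      show "(\<lambda>s. cmod (vector_derivative (hh t) (at s)) / bdist (- CC) (hh t s)) integrable_on {0..1}"
        unfolding vd_hh using cont by (rule integrable_continuous_interval)
    qed simp
    then show "{qh_length (- CC) g |g. valid_path g \<and> path_image g \<subseteq> - CC \<and>
        pathstart g = x \<and> pathfinish g = y \<and>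
        (\<lambda>t. cmod (vector_derivative g (at t)) / bdist (- CC) (g t)) integrable_on {0..1}} \<noteq> {}" by blast
  next
    have lnb: "3*K+1 \<le> ln (1 + t^2/dx^2)"
    proof -
      have "dx^2 \<le> (2*t^2)^2" using dxu dx0 by (intro power_mono) auto
      also have "\<dots> = (4*t)*t^3" by (simp add: power2_eq_square power3_eq_cube)
      also have "\<dots> \<le> 1*t^3" using t1 t0 by (intro mult_right_mono) auto
      finally have d3: "dx^2 \<le> t^3" by simp
      have "1/t \<le> t^2/dx^2"
        using d3 t0 dx0 by (simp add: divide_simps power3_eq_cube power2_eq_square algebra_simps)
      then have "1/t \<le> 1 + t^2/dx^2" by (smt (verit) divide_nonneg_nonneg zero_le_power2)
      moreover have "0 < 1/t" using t0 by simp
      moreover have "0 < 1 + t^2/dx^2" using calculation by linarith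
      ultimately have "ln (1/t) \<le> ln (1 + t^2/dx^2)" using ln_le_cancel_iff by blast
      moreover have "ln t \<le> - (3*K+1)" using te t0 by (metis ln_exp ln_le_cancel_iff exp_gt_zero)
      moreover have "ln (1/t) = - ln t" using t0 by (simp add: ln_div)
      ultimately show ?thesis by linarith
    qed
    fix q assume "q \<in> {qh_length (- CC) g |g. valid_path g \<and> path_image g \<subseteq> - CC \<and>
        pathstart g = x \<and> pathfinish g = y \<and>
        (\<lambda>t. cmod (vector_derivative g (at t)) / bdist (- CC) (g t)) integrable_on {0..1}}"
    then obtain g where q: "q = qh_length (- CC) g" and vp: "valid_path g" and img: "path_image g \<subseteq> - CC"
      and st: "pathstart g = x" and fi: "pathfinish g = y"
      and int: "(\<lambda>t. cmod (vector_derivative g (at t)) / bdist (- CC) (g t)) integrable_on {0..1}"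
      by blast
    obtain s0 where s0: "0 \<le> s0" "s0 \<le> 1" "t \<le> cmod (g s0 - x)"
      using crossing[OF t0 t1 vp img] st fi unfolding x_def y_def pathstart_def pathfinish_def by blast
    have "ln (1 + t^2/dx^2) \<le> 3 * qh_length (- CC) g"
      by (rule qh_lower[OF vp img st int bdist_GG_pos s0(1,2) s0(3) _ dx_def dx0]) (use t0 in auto)
    then show "(3*K+1)/3 \<le> q" using lnb q by argo
  qed
  ultimately show False by argo
qed

theorem proposition4p1:
  shows "\<exists>D :: complex set. bounded D \<and> jordan_domain D \<and>
     (\<exists>\<phi>. control_fun \<phi> \<and> phi_uniform \<phi> D) \<and>
     \<not> (\<exists>\<psi>. control_fun \<psi> \<and> phi_uniform \<psi> (- closure D))"
  using bounded_DD jordan_DD control_phi0 DD_phi_uniform ext_not_uniform by blast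

end
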